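(* Let $x>1$ be an irrational real number and let $(x_n)_{n\geq1}$ be any sequence of rational numbers with $x_n\geq1$ and $x_n\to x$. Write the Taylor expansion at $q=0$ of the $q$-deformed rational $[x_n]_q$ as $[x_n]_q=\sum_{k\geq0}\varkappa_{n,k}q^k$. Then for every fixed $k\geq0$ the sequence $(\varkappa_{n,k})_{n\geq1}$ is eventually constant. Its eventual value $\varkappa_k=\lim_{n\to\infty}\varkappa_{n,k}$ is an integer, and the sequence $(\varkappa_k)_{k\geq0}$ does not depend on the choice of the sequence $(x_n)$ converging to $x$.
   Context: For an integer $a\geq1$ put $[a]_q=1+q+\cdots+q^{a-1}$ and $[a]_{q^{-1}}=1+q^{-1}+\cdots+q^{-(a-1)}$. Every rational number $r/s>1$ has a unique expansion as a regular continued fraction of even length, $$r/s=[a_1,\ldots,a_{2m}]=a_1+\cfrac{1}{a_2+\cfrac{1}{\ddots+\cfrac{1}{a_{2m}}}},$$ with all $a_i\in\mathbb{Z}_{\geq1}$. Its $q$-deformation is the rational function $$\left[\tfrac{r}{s}\right]_q=[a_1]_q+\cfrac{q^{a_1}}{[a_2]_{q^{-1}}+\cfrac{q^{-a_2}}{[a_3]_q+\cfrac{q^{a_3}}{[a_4]_{q^{-1}}+\cfrac{q^{-a_4}}{\ddots+\cfrac{q^{a_{2m-1}}}{[a_{2m}]_{q^{-1}}}}}}}.$$ One also sets $[1]_q=1$; for integers $n\geq2$ this gives $[n]_q=1+q+\cdots+q^{n-1}$. Each $[r/s]_q$ is a quotient $\mathcal{R}(q)/\mathcal{S}(q)$ of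 polynomials with nonnegative integer coefficients, each having constant term $1$. It is identified with its Taylor expansion at $q=0$, which is an element of $\mathbb{Z}[[q]]$. *)

theory Defs
  imports "HOL-Analysis.Analysis" "HOL-Computational_Algebra.Formal_Laurent_Series"
begin

fun cf_val :: "nat list \<Rightarrow> rat" where
  "cf_val [] = 0"
| "cf_val [a] = of_nat a"
| "cf_val (a # as) = of_nat a + 1 / cf_val as"

definition even_cf :: "rat \<Rightarrow> nat list" where
  "even_cf r = (THE as. as \<noteq> [] \<and> even (length as) \<and> (\<forall>a\<in>set as. a \<ge> 1) \<and> cf_val as = r)"

definition qint :: "nat \<Rightarrow> rat fls" where
  "qint a = (\<Sum>i<a. fls_X ^ i)"

definition qint_inv :: "nat \<Rightarrow> rat fls" where
  "qint_inv a = (\<Sum>i<a. fls_X_inv ^ i)"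

text \<open>The q-deformed continued fraction; the flag says whether the current level
  uses q (True) or q^{-1} (False).\<close>
fun qcf :: "bool \<Rightarrow> nat list \<Rightarrow> rat fls" where
  "qcf b [] = 0"
| "qcf b [a] = (if b then qint a else qint_inv a)"
| "qcf b (a # as) =
     (if b then qint a + fls_X ^ a / qcf False as
           else qint_inv a + fls_X_inv ^ a / qcf True as)"

text \<open>The q-deformed rational [r]_q for rational r \<ge> 1 (with [1]_q = 1), as an element
  of the field of formal Laurent series (i.e. its expansion at q = 0).\<close>
definition qrat :: "rat \<Rightarrow> rat fls" where
  "qrat r = (if r = 1 then 1 else qcf True (even_cf r))"

end

theory Submission
  imports Defs
begin

definition qf :: "nat \<Rightarrow> rat fps" where "qf a = (\<Sum>i<a. fps_X ^ i)"

lemma qf_nth: "qf a $ n = (if n < a then 1 else 0)"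
  by (simp add: qf_def fps_sum_nth)

lemma qint_Suc: "qint (Suc b) = qint b + fls_X ^ b"
  by (simp add: qint_def)

lemma qint_fps: "qint a = fps_to_fls (qf a)"
  by (induction a) (simp_all add: qint_Suc qf_def fps_to_fls_power, simp add: qint_def)

lemma qint_inv_Suc: "qint_inv (Suc b) = 1 + fls_X_inv * qint_inv b"
  unfolding qint_inv_def by (subst sum.lessThan_Suc_shift) (simp add: sum_distrib_left)

lemma XXinv: "fls_X * (fls_X_inv :: rat fls) = 1"
  by (metis fls_inverse_X fls_X_nonzero right_inverse)

lemma qint_inv_X: "fls_X ^ b * qint_inv b = fls_X * qint b"
proof (induction b)
  case 0 thus ?case by (simp add: qint_def qint_inv_def)
next
  case (Suc b)
  have "fls_X ^ Suc b * qint_inv (Suc b) = fls_X ^ Suc b + fls_X ^ b * (fls_X * fls_X_inv) * qint_inv b"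
    by (simp add: qint_inv_Suc algebra_simps)
  also have "\<dots> = fls_X * qint (Suc b)" using Suc by (simp add: XXinv qint_Suc algebra_simps)
  finally show ?case .
qed

lemma qint_inv_eq: "qint_inv b = fls_X_inv ^ b * (fls_X * qint b)"
proof -
  have "fls_X_inv ^ b * (fls_X ^ b * qint_inv b) = qint_inv b"
    by (metis (no_types, lifting) XXinv mult.assoc mult.commute mult_1 power_mult_distrib power_one)
  thus ?thesis by (simp add: qint_inv_X)
qed

definition vl :: "nat list \<Rightarrow> bool" where "vl l \<longleftrightarrow> l \<noteq> [] \<and> (\<forall>a\<in>set l. a \<ge> 1)"

fun Wf :: "nat list \<Rightarrow> rat fps" where
  "Wf [a, b] = qf a + fps_X ^ (a + b - 1) * inverse (qf b)"
| "Wf (a # b # c # r) = qf a + fps_X ^ (a + b) * inverse (fps_X * qf b + inverse (Wf (c # r)))"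
| "Wf _ = 0"

lemma vl_Cons: "vl (a # r) \<longleftrightarrow> a \<ge> 1 \<and> (r = [] \<or> vl r)"
  by (auto simp: vl_def)

lemma Wf_0: "vl l \<Longrightarrow> even (length l) \<Longrightarrow> Wf l $ 0 = 1"
proof (induction l rule: Wf.induct)
  case (1 a b)
  thus ?case by (simp add: qf_nth fps_X_power_mult_nth vl_Cons)
next
  case (2 a b c r)
  thus ?case by (simp add: qf_nth fps_X_power_mult_nth vl_Cons)
qed (auto simp: vl_def)

lemma F_inv: "f $ 0 \<noteq> 0 \<Longrightarrow> fps_to_fls (inverse f) = inverse (fps_to_fls f)"
  by (simp add: fls_inverse_fps_to_fls)

lemma aux1: "(fls_X::rat fls) ^ a * inverse (fls_X_inv ^ b * (fls_X * qint b)) = fls_X ^ a * fls_X ^ b * inverse fls_X * inverse (qint b)"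
  by (simp add: fls_inverse_X_inv_power mult_ac)
lemma aux2: "qint_inv b + fls_X_inv ^ b / W = fls_X_inv ^ b * (fls_X * qint b + inverse W)"
  by (simp add: qint_inv_eq divide_inverse algebra_simps)
lemma aux3: "(fls_X::rat fls) ^ a / (fls_X_inv ^ b * (fls_X * qint b + inverse W)) = fls_X ^ (a + b) * inverse (fls_X * qint b + inverse W)"
  by (simp add: divide_inverse fls_inverse_X_inv_power power_add mult_ac)
lemma aux4: "a\<ge>1 \<Longrightarrow> (fls_X :: rat fls) ^ a * fls_X ^ b = fls_X ^ (a + b - 1) * fls_X"
proof -
  assume "a \<ge> 1" hence "a + b = Suc (a + b - 1)" by simp
  hence "(fls_X :: rat fls) ^ (a + b) = fls_X ^ (a + b - 1) * fls_X" by (metis power_Suc2)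
  thus ?thesis by (simp add: power_add)
qed
lemma aux5: "qf b $ 0 \<noteq> 0 \<Longrightarrow> qint a + fls_X ^ (a + b - 1) * inverse (qint b) = fps_to_fls (Wf [a, b])"
  by (simp add: qint_fps fls_times_fps_to_fls fps_to_fls_power F_inv)
lemma aux6: "Wf (c # r) $ 0 = 1 \<Longrightarrow> inverse (fls_X * qint b + inverse (fps_to_fls (Wf (c # r)))) = fps_to_fls (inverse (fps_X * qf b + inverse (Wf (c # r))))"
  by (simp add: F_inv qint_fps fls_times_fps_to_fls)
lemma aux7: "qint a + fls_X ^ (a + b) * fps_to_fls (inverse (fps_X * qf b + inverse (Wf (c # r)))) = fps_to_fls (Wf (a # b # c # r))"
  by (simp add: qint_fps fls_times_fps_to_fls fps_to_fls_power)

lemma qcf_Wf: "vl l \<Longrightarrow> even (length l) \<Longrightarrow> qcf True l = fps_to_fls (Wf l)"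
proof (induction l rule: Wf.induct)
  case (1 a b)
  hence ab: "a \<ge> 1" "b \<ge> 1" by (auto simp: vl_def)
  have q0: "qf b $ 0 \<noteq> 0" using ab by (simp add: qf_nth)
  have X: "(fls_X :: rat fls) \<noteq> 0" by simp
  have "qcf True [a, b] = qint a + fls_X ^ a * inverse (fls_X_inv ^ b * (fls_X * qint b))"
    by (simp add: qint_inv_eq divide_inverse)
  also have "\<dots> = qint a + fls_X ^ (a + b - 1) * inverse (qint b)"
    unfolding aux1 aux4[OF ab(1)] using X by simp
  also have "\<dots> = fps_to_fls (Wf [a, b])"
    using q0 by (rule aux5)
  finally show ?case .
next
  case (2 a b c r)
  hence ab: "a \<ge> 1" "b \<ge> 1" and v: "vl (c # r)" "even (length (c # r))" by (auto simp: vl_def)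
  have IH: "qcf True (c # r) = fps_to_fls (Wf (c # r))" using 2(1) v by blast
  have W0: "Wf (c # r) $ 0 = 1" using Wf_0 v by blast
  have "qcf True (a # b # c # r) = qint a + fls_X ^ a / (qint_inv b + fls_X_inv ^ b / fps_to_fls (Wf (c # r)))"
    using IH by simp
  also have "\<dots> = fps_to_fls (Wf (a # b # c # r))"
    unfolding aux2 aux3 aux6[OF W0] aux7 ..
  finally show ?case .
qed (auto simp: vl_def)

lemma inv_diff:
  fixes f g :: "rat fps"
  assumes "f $ 0 \<noteq> 0" "g $ 0 \<noteq> 0"
  shows "inverse f - inverse g = (g - f) * inverse f * inverse g"
proof -
  have "(g - f) * inverse f * inverse g = (g * inverse g) * inverse f - (f * inverse f) * inverse g"
    by (simp add: algebra_simps)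
  also have "\<dots> = inverse f - inverse g" using assms by (simp add: inverse_mult_eq_1')
  finally show ?thesis by simp
qed

lemma Wf_contr:
  "vl l \<Longrightarrow> vl l' \<Longrightarrow> even (length l) \<Longrightarrow> even (length l') \<Longrightarrow> 2*j \<le> length l \<Longrightarrow>
   2*j \<le> length l' \<Longrightarrow> take (2*j) l = take (2*j) l' \<Longrightarrow> \<exists>h. Wf l - Wf l' = fps_X ^ j * h"
proof (induction j arbitrary: l l')
  case 0
  show ?case by (rule exI[of _ "Wf l - Wf l'"]) simp
next
  case (Suc j)
  obtain a b r where l: "l = a # b # r"
    using Suc.prems(5) by (cases l; cases "tl l") auto
  obtain a' b' r' where l': "l' = a' # b' # r'"
    using Suc.prems(6) by (cases l'; cases "tl l'") auto
  have eq: "a' = a" "b' = b" "take (2*j) r = take (2*j) r'"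
    using Suc.prems(7) l l' by auto
  have ab: "a \<ge> 1" "b \<ge> 1" using Suc.prems(1) l by (auto simp: vl_def)
  have er: "even (length r)" "even (length r')" using Suc.prems(3,4) l l' by auto
  have vr: "r \<noteq> [] \<Longrightarrow> vl r" "r' \<noteq> [] \<Longrightarrow> vl r'"
    using Suc.prems(1,2) l l' by (auto simp: vl_def)
  have mixed: "\<exists>h. Wf [a, b] - Wf (a # b # c # s) = fps_X * h" for c s
  proof -
    define k where "k = a + b - 2"
    have k: "a + b - 1 = Suc k" using ab by (simp add: k_def)
    have k2: "a + b = Suc (Suc k)" using ab by (simp add: k_def)
    show ?thesis
      by (rule exI[of _ "fps_X ^ k * inverse (qf b) - fps_X ^ Suc k * inverse (fps_X * qf b + inverse (Wf (c # s)))"])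
         (simp only: Wf.simps k k2 diff_Suc_1 power_Suc right_diff_distrib mult.assoc add_diff_cancel_left)
  qed
  show ?case
  proof (cases "r = []")
    case True
    hence j0: "j = 0" using Suc.prems(5) l by simp
    show ?thesis
    proof (cases "r' = []")
      case True thus ?thesis using \<open>r = []\<close> l l' eq by (intro exI[of _ 0]) simp
    next
      case False
      then obtain c s where "r' = c # s" by (cases r') auto
      thus ?thesis using mixed[of c s] \<open>r = []\<close> l l' eq j0 by simp
    qed
  next
    case rne: False
    show ?thesis
    proof (cases "r' = []")
      case True
      hence j0: "j = 0" using Suc.prems(6) l' by simp
      obtain c s where "r = c # s" using rne by (cases r) auto
      then obtain h where "Wf [a, b] - Wf l = fps_X * h" using mixed[of c s] l by auto
      thus ?thesis using True l' eq j0 by (intro exI[of _ "-h"]) (simp add: algebra_simps)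
    next
      case r'ne: False
      have len: "2*j \<le> length r" "2*j \<le> length r'" using Suc.prems(5,6) l l' by auto
      obtain h where h: "Wf r - Wf r' = fps_X ^ j * h"
        using Suc.IH[OF vr(1)[OF rne] vr(2)[OF r'ne] er len eq(3)] by blast
      obtain c s where cs: "r = c # s" using rne by (cases r) auto
      obtain c' s' where cs': "r' = c' # s'" using r'ne by (cases r') auto
      define W where "W = Wf r"
      define W' where "W' = Wf r'"
      have W0: "W $ 0 = 1" "W' $ 0 = 1" unfolding W_def W'_def
        using Wf_0 vr rne r'ne er by auto
      define A where "A = fps_X * qf b + inverse W"
      define A' where "A' = fps_X * qf b + inverse W'"
      have A0: "A $ 0 \<noteq> 0" "A' $ 0 \<noteq> 0" using W0 by (simp_all add: A_def A'_def)
      have "Wf l - Wf l' = fps_X ^ (a + b) * (inverse A - inverse A')"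
        using l l' eq cs cs' by (simp only: A_def A'_def W_def W'_def Wf.simps right_diff_distrib) simp
      also have "inverse A - inverse A' = (A' - A) * inverse A * inverse A'"
        using inv_diff A0 by blast
      also have "A' - A = inverse W' - inverse W" by (simp add: A_def A'_def)
      also have "\<dots> = (W - W') * inverse W' * inverse W" using inv_diff[of W' W] W0 by simp
      also have "W - W' = fps_X ^ j * h" using h by (simp add: W_def W'_def)
      finally have "Wf l - Wf l' = fps_X ^ (a + b) * (fps_X ^ j * h * inverse W' * inverse W * inverse A * inverse A')"
        by (simp add: algebra_simps)
      also have "\<dots> = fps_X ^ Suc j * (fps_X ^ (a + b - 1) * h * inverse W' * inverse W * inverse A * inverse A')"
      proof -
        have "a + b + j = Suc j + (a + b - 1)" using ab by simp
        hence "(fps_X :: rat fps) ^ (a + b) * fps_X ^ j = fps_X ^ Suc j * fps_X ^ (a + b - 1)"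
          by (metis power_add)
        thus ?thesis by (simp add: algebra_simps)
      qed
      finally show ?thesis by blast
    qed
  qed
qed

definition zi :: "rat fps \<Rightarrow> bool" where "zi f \<longleftrightarrow> (\<forall>n. f $ n \<in> \<int>)"

lemma zi_add: "zi f \<Longrightarrow> zi g \<Longrightarrow> zi (f + g)" by (auto simp: zi_def)
lemma zi_mult: "zi f \<Longrightarrow> zi g \<Longrightarrow> zi (f * g)" by (auto simp: zi_def fps_mult_nth)
lemma zi_X: "zi fps_X" by (auto simp: zi_def fps_X_def)
lemma zi_pow: "zi f \<Longrightarrow> zi (f ^ n)" by (induction n) (simp add: zi_def, simp add: zi_mult)
lemma zi_qf: "zi (qf a)" by (auto simp: zi_def qf_nth)

lemma zi_inv:
  fixes f :: "rat fps"
  assumes z: "zi f" and f0: "f $ 0 = 1"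
  shows "zi (inverse f)"
  unfolding zi_def
proof
  fix n
  show "inverse f $ n \<in> \<int>"
  proof (induction n rule: less_induct)
    case (less n)
    show ?case
    proof (cases n)
      case 0 thus ?thesis using f0 by simp
    next
      case (Suc m)
      have "(f * inverse f) $ n = 0" using f0 Suc by (simp add: inverse_mult_eq_1')
      hence "(\<Sum>i=0..n. f $ i * inverse f $ (n - i)) = 0" by (simp add: fps_mult_nth)
      hence "f $ 0 * inverse f $ n + (\<Sum>i=Suc 0..n. f $ i * inverse f $ (n - i)) = 0"
        by (simp add: sum.atLeast_Suc_atMost)
      hence eq: "inverse f $ n = - (\<Sum>i=Suc 0..n. f $ i * inverse f $ (n - i))" using f0 by (simp add: add_eq_0_iff)
      have "(\<Sum>i=Suc 0..n. f $ i * inverse f $ (n - i)) \<in> \<int>"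
      proof (rule Ints_sum)
        fix i assume "i \<in> {Suc 0..n}"
        hence "n - i < n" by auto
        thus "f $ i * inverse f $ (n - i) \<in> \<int>" using less z by (auto simp: zi_def)
      qed
      thus ?thesis using eq by simp
    qed
  qed
qed

lemma Wf_zi: "vl l \<Longrightarrow> even (length l) \<Longrightarrow> zi (Wf l)"
proof (induction l rule: Wf.induct)
  case (1 a b)
  hence "b \<ge> 1" by (auto simp: vl_def)
  thus ?case unfolding Wf.simps by (intro zi_add zi_mult zi_pow zi_qf zi_X zi_inv) (simp_all add: qf_nth)
next
  case (2 a b c r)
  hence v: "vl (c # r)" "even (length (c # r))" by (auto simp: vl_def)
  hence z: "zi (Wf (c # r))" and w0: "Wf (c # r) $ 0 = 1" using 2 Wf_0 by auto
  have "zi (inverse (Wf (c # r)))" using zi_inv z w0 by blast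
  moreover have "(fps_X * qf b + inverse (Wf (c # r))) $ 0 = 1" using w0 by simp
  ultimately show ?case unfolding Wf.simps using z
    by (intro zi_add zi_mult zi_pow zi_qf zi_X zi_inv) auto
qed (auto simp: vl_def)

lemma cf_Cons: "l \<noteq> [] \<Longrightarrow> cf_val (a # l) = of_nat a + 1 / cf_val l"
  by (cases l) auto

lemma cf_ge1: "vl l \<Longrightarrow> cf_val l \<ge> 1"
proof (induction l rule: cf_val.induct)
  case (3 a v va)
  hence "cf_val (v # va) \<ge> 1" "a \<ge> 1" by (auto simp: vl_def)
  hence p: "0 < 1 / cf_val (v # va)" "(1::rat) \<le> of_nat a" by simp_all
  have "cf_val (a # v # va) = of_nat a + 1 / cf_val (v # va)" by simp
  thus ?case using p by linarith
qed (auto simp: vl_def)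

lemma cf_head:
  fixes y :: "'a::floor_ceiling"
  assumes v: "vl l" and y: "of_rat (cf_val l) = y" and ni: "y \<notin> \<int>"
  shows "\<exists>rest. l = nat \<lfloor>y\<rfloor> # rest \<and> vl rest \<and> of_rat (cf_val rest) = 1 / (y - of_int \<lfloor>y\<rfloor>)"
proof -
  obtain a rest where l: "l = a # rest" using v by (cases l) (auto simp: vl_def)
  have rne: "rest \<noteq> []"
  proof
    assume "rest = []"
    hence "y = of_nat a" using y l by simp
    thus False using ni by simp
  qed
  have vr: "vl rest" using v l rne by (auto simp: vl_def)
  define w where "w = (of_rat (cf_val rest) :: 'a)"
  have w1: "w \<ge> 1" using cf_ge1[OF vr] unfolding w_def by (metis of_rat_1 of_rat_less_eq)
  have yw: "y = of_nat a + 1 / w" using y l rne by (simp add: cf_Cons w_def of_rat_add of_rat_divide)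
  have "w \<noteq> 1"
  proof
    assume "w = 1"
    hence "y = of_nat (Suc a)" using yw by simp
    thus False using ni by (metis Ints_of_nat)
  qed
  hence w1': "w > 1" using w1 by simp
  hence f: "0 < 1 / w" "1 / w < 1" by auto
  have fl: "\<lfloor>y\<rfloor> = int a"
    using f yw by (intro floor_unique) auto
  have "y - of_int \<lfloor>y\<rfloor> = 1 / w" using yw fl by simp
  hence "1 / (y - of_int \<lfloor>y\<rfloor>) = w" by simp
  thus ?thesis using l vr fl by (auto simp: w_def)
qed

lemma cf_one: "vl l \<Longrightarrow> cf_val l = 1 \<Longrightarrow> l = [1]"
proof (cases l rule: cf_val.cases)
  case (3 a v va)
  assume vl: "vl l" and c: "cf_val l = 1"
  have "cf_val (v # va) \<ge> 1" "a \<ge> 1" using vl 3 cf_ge1[of "v # va"] by (auto simp: vl_def)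
  hence p: "0 < 1 / cf_val (v # va)" "(1::rat) \<le> of_nat a" by simp_all
  have "cf_val l = of_nat a + 1 / cf_val (v # va)" using 3 by simp
  hence "cf_val l > 1" using p by linarith
  thus ?thesis using c by simp
qed (auto simp: vl_def)

lemma cf_int: 
  assumes vl: "vl l" and c: "cf_val l = of_int n"
  shows "l = [nat n] \<or> l = [nat n - 1, 1]"
proof (cases l rule: cf_val.cases)
  case (2 a) thus ?thesis using c by simp
next
  case (3 a v va)
  define w where "w = cf_val (v # va)"
  have w1: "w \<ge> 1" using vl 3 cf_ge1[of "v # va"] by (auto simp: vl_def w_def)
  have eq: "of_int n = of_nat a + 1 / w" using c 3 by (simp add: w_def)
  have "w = 1"
  proof (rule ccontr)
    assume "w \<noteq> 1"
    hence p: "0 < 1 / w" "1 / w < 1" using w1 by auto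
    have "of_int (n - int a) = 1 / w" using eq by simp
    hence "(0::rat) < of_int (n - int a)" "of_int (n - int a) < (1::rat)" using p by simp_all
    hence "0 < n - int a" "n - int a < 1" by linarith+
    thus False by linarith
  qed
  hence "v # va = [1]" using cf_one[of "v # va"] vl 3 by (auto simp: vl_def w_def)
  moreover have "n = int a + 1"
  proof -
    have "(of_int n :: rat) = of_int (int a + 1)" using eq \<open>w = 1\<close> by simp
    thus ?thesis by (simp only: of_int_eq_iff)
  qed
  ultimately show ?thesis using 3 by auto
qed (use vl in \<open>auto simp: vl_def\<close>)

lemma cf_unique:
  "vl l1 \<Longrightarrow> vl l2 \<Longrightarrow> cf_val l1 = cf_val l2 \<Longrightarrow> even (length l1) = even (length l2) \<Longrightarrow> l1 = l2"
proof (induction l1 arbitrary: l2)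
  case Nil thus ?case by (simp add: vl_def)
next
  case (Cons a r1)
  show ?case
  proof (cases "cf_val (a # r1) \<in> \<int>")
    case True
    then obtain n where n: "cf_val (a # r1) = of_int n" by (metis Ints_cases)
    have "a # r1 = [nat n] \<or> a # r1 = [nat n - 1, 1]" using cf_int Cons.prems n by blast
    moreover have "l2 = [nat n] \<or> l2 = [nat n - 1, 1]" using cf_int Cons.prems n by metis
    ultimately show ?thesis using Cons.prems(4) by auto
  next
    case False
    define y where "y = cf_val (a # r1)"
    obtain r1' where h1: "a # r1 = nat \<lfloor>y\<rfloor> # r1'" "vl r1'" "of_rat (cf_val r1') = 1 / (y - of_int \<lfloor>y\<rfloor>)"
      using cf_head[of "a # r1" y] Cons.prems False unfolding y_def by auto
    obtain r2 where h2: "l2 = nat \<lfloor>y\<rfloor> # r2" "vl r2" "of_rat (cf_val r2) = 1 / (y - of_int \<lfloor>y\<rfloor>)"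
      using cf_head[of l2 y] Cons.prems False unfolding y_def by auto
    have "r1 = r2" using Cons.IH[of r2] h1 h2 Cons.prems(4) by auto
    thus ?thesis using h1 h2 by simp
  qed
qed

lemma cf_exists:
  "0 < q \<Longrightarrow> of_nat q * r \<in> \<int> \<Longrightarrow> r \<ge> 1 \<Longrightarrow>
   (\<exists>l. vl l \<and> odd (length l) \<and> cf_val l = r) \<and> (r > 1 \<longrightarrow> (\<exists>l. vl l \<and> even (length l) \<and> cf_val l = r))"
proof (induction q arbitrary: r rule: less_induct)
  case (less q)
  show ?case
  proof (cases "r \<in> \<int>")
    case True
    then obtain n where n: "r = of_int n" by (metis Ints_cases)
    have n1: "n \<ge> 1" using less.prems n by simp
    have "vl [nat n] \<and> odd (length [nat n]) \<and> cf_val [nat n] = r" using n n1 by (simp add: vl_def)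
    moreover have "r > 1 \<Longrightarrow> vl [nat n - 1, 1] \<and> even (length [nat n - 1, 1]) \<and> cf_val [nat n - 1, 1] = r"
      using n by (simp add: vl_def of_nat_diff)
    ultimately show ?thesis by blast
  next
    case False
    define a where "a = nat \<lfloor>r\<rfloor>"
    define f where "f = r - of_int \<lfloor>r\<rfloor>"
    have fl1: "\<lfloor>r\<rfloor> \<ge> 1" using less.prems by simp
    have a: "of_nat a = of_int \<lfloor>r\<rfloor>" "a \<ge> 1" using fl1 unfolding a_def by (simp, simp add: le_nat_iff)
    have "of_int \<lfloor>r\<rfloor> \<noteq> r" using False by (metis Ints_of_int)
    moreover have "of_int \<lfloor>r\<rfloor> \<le> r" "r < of_int (\<lfloor>r\<rfloor> + 1)" using floor_correct[of r] by auto
    ultimately have lt: "of_int \<lfloor>r\<rfloor> < r" "r < of_int (\<lfloor>r\<rfloor> + 1)" unfolding less_le by auto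
    hence f0: "0 < f" "f < 1" unfolding f_def by simp_all
    have qf: "of_nat q * f \<in> \<int>" using less.prems(2) unfolding f_def by (simp add: right_diff_distrib)
    then obtain m where m: "of_nat q * f = of_int m" by (metis Ints_cases)
    have "(0::rat) < of_nat q * f" "of_nat q * f < of_nat q" using f0 less.prems(1) by simp_all
    hence "(0::rat) < of_int m" "(of_int m::rat) < of_int (int q)" using m by simp_all
    hence m0: "0 < m" "m < int q" by (simp_all only: of_int_less_iff)
    define r' where "r' = 1 / f"
    have r'1: "r' > 1" using f0 by (simp add: r'_def)
    have "of_nat (nat m) * r' = of_nat q" using m m0 f0 by (simp add: r'_def field_simps)
    hence "of_nat (nat m) * r' \<in> \<int>" by simp
    hence IH: "(\<exists>l. vl l \<and> odd (length l) \<and> cf_val l = r') \<and> (\<exists>l. vl l \<and> even (length l) \<and> cf_val l = r')"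
      using less.IH[of "nat m" r'] m0 r'1 by auto
    then obtain l1 l2 where l1: "vl l1" "odd (length l1)" "cf_val l1 = r'"
      and l2: "vl l2" "even (length l2)" "cf_val l2 = r'" by blast
    have ne: "l1 \<noteq> []" "l2 \<noteq> []" using l1 l2 by (auto simp: vl_def)
    have rr: "r = of_nat a + 1 / r'" using a f0 by (simp add: r'_def f_def)
    have "vl (a # l2) \<and> odd (length (a # l2)) \<and> cf_val (a # l2) = r"
      using l2 ne a rr by (simp add: vl_Cons cf_Cons)
    moreover have "vl (a # l1) \<and> even (length (a # l1)) \<and> cf_val (a # l1) = r"
      using l1 ne a rr by (simp add: vl_Cons cf_Cons)
    ultimately show ?thesis by blast
  qed
qed

lemma even_cf_ok:
  assumes "r > 1"
  shows "vl (even_cf r) \<and> even (length (even_cf r)) \<and> cf_val (even_cf r) = r"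
proof -
  obtain p q where pq: "quotient_of r = (p, q)" by (cases "quotient_of r")
  have q0: "q > 0" using quotient_of_denom_pos[OF pq] .
  have "r = of_int p / of_int q" using quotient_of_div[OF pq] .
  hence "of_nat (nat q) * r = of_int p" using q0 by simp
  hence "\<exists>l. vl l \<and> even (length l) \<and> cf_val l = r"
    using cf_exists[of "nat q" r] q0 assms by auto
  then obtain l where l: "vl l" "even (length l)" "cf_val l = r" by blast
  have ex1: "\<exists>!as. as \<noteq> [] \<and> even (length as) \<and> (\<forall>a\<in>set as. a \<ge> 1) \<and> cf_val as = r"
  proof (rule ex1I[of _ l])
    show "l \<noteq> [] \<and> even (length l) \<and> (\<forall>a\<in>set l. a \<ge> 1) \<and> cf_val l = r" using l by (auto simp: vl_def)
  next
    fix as assume "as \<noteq> [] \<and> even (length as) \<and> (\<forall>a\<in>set as. a \<ge> 1) \<and> cf_val as = r"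
    thus "as = l" using cf_unique[of as l] l by (auto simp: vl_def)
  qed
  show ?thesis using theI'[OF ex1] unfolding even_cf_def vl_def by blast
qed

definition cfT :: "real \<Rightarrow> real" where "cfT y = 1 / (y - of_int \<lfloor>y\<rfloor>)"

lemma cf_prefix:
  "\<forall>l y. vl l \<longrightarrow> of_rat (cf_val l) = y \<longrightarrow> (\<forall>i<m. (cfT ^^ i) y \<notin> \<int>) \<longrightarrow>
     m < length l \<and> (\<forall>i<m. l ! i = nat \<lfloor>(cfT ^^ i) y\<rfloor>)"
proof (induction m)
  case 0 thus ?case by (auto simp: vl_def)
next
  case (Suc m)
  show ?case
  proof (intro allI impI)
    fix l y assume v: "vl l" and y: "of_rat (cf_val l) = (y::real)" and ni: "\<forall>i<Suc m. (cfT ^^ i) y \<notin> \<int>"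
    have "y \<notin> \<int>" using ni by force
    then obtain rest where r: "l = nat \<lfloor>y\<rfloor> # rest" "vl rest" "of_rat (cf_val rest) = cfT y"
      using cf_head[OF v y] by (auto simp: cfT_def)
    have sh: "(cfT ^^ i) (cfT y) = (cfT ^^ Suc i) y" for i by (simp add: funpow_Suc_right del: funpow.simps)
    have "\<forall>i<m. (cfT ^^ i) (cfT y) \<notin> \<int>" using ni sh by auto
    hence IH: "m < length rest \<and> (\<forall>i<m. rest ! i = nat \<lfloor>(cfT ^^ i) (cfT y)\<rfloor>)"
      using Suc.IH r by blast
    show "Suc m < length l \<and> (\<forall>i<Suc m. l ! i = nat \<lfloor>(cfT ^^ i) y\<rfloor>)"
    proof (intro conjI allI impI)
      show "Suc m < length l" using IH r by simp
    next
      fix i assume "i < Suc m"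
      thus "l ! i = nat \<lfloor>(cfT ^^ i) y\<rfloor>"
        using IH r sh by (cases i) auto
    qed
  qed
qed

lemma irr_orbit:
  assumes "x > 1" "x \<notin> \<rat>"
  shows "(cfT ^^ i) x > 1 \<and> (cfT ^^ i) x \<notin> \<rat>"
proof (induction i)
  case 0 thus ?case using assms by simp
next
  case (Suc i)
  define z where "z = (cfT ^^ i) x"
  have zq: "z \<notin> \<rat>" using Suc z_def by simp
  hence "z \<notin> \<int>" using Ints_subset_Rats by blast
  hence ne: "of_int \<lfloor>z\<rfloor> \<noteq> z" by (metis Ints_of_int)
  have le: "of_int \<lfloor>z\<rfloor> \<le> z" "z < of_int \<lfloor>z\<rfloor> + 1" using floor_correct[of z] by auto
  have "of_int \<lfloor>z\<rfloor> < z" by (rule order.not_eq_order_implies_strict[OF ne le(1)])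
  hence "of_int \<lfloor>z\<rfloor> < z" "z < of_int \<lfloor>z\<rfloor> + 1" using le by auto
  hence f: "0 < z - of_int \<lfloor>z\<rfloor>" "z - of_int \<lfloor>z\<rfloor> < 1" using le by linarith+
  have g1: "cfT z > 1" using f by (simp add: cfT_def)
  have "cfT z \<notin> \<rat>"
  proof
    assume "cfT z \<in> \<rat>"
    hence "1 / cfT z \<in> \<rat>" by simp
    hence "z - of_int \<lfloor>z\<rfloor> \<in> \<rat>" using f by (simp add: cfT_def)
    hence "z - of_int \<lfloor>z\<rfloor> + of_int \<lfloor>z\<rfloor> \<in> \<rat>" by (intro Rats_add) auto
    thus False using zq by simp
  qed
  thus ?case using g1 by (simp add: z_def)
qed

lemma conv_step:
  fixes Y :: "nat \<Rightarrow> real"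
  assumes Y: "Y \<longlonglongrightarrow> z" and ni: "z \<notin> \<int>"
  shows "eventually (\<lambda>n. of_int \<lfloor>z\<rfloor> < Y n \<and> Y n < of_int \<lfloor>z\<rfloor> + 1) sequentially"
    and "(\<lambda>n. cfT (Y n)) \<longlonglongrightarrow> cfT z"
proof -
  have ne: "of_int \<lfloor>z\<rfloor> \<noteq> z" using ni by (metis Ints_of_int)
  have le: "of_int \<lfloor>z\<rfloor> \<le> z" "z < of_int \<lfloor>z\<rfloor> + 1" using floor_correct[of z] by auto
  have f: "of_int \<lfloor>z\<rfloor> < z" "z < of_int \<lfloor>z\<rfloor> + 1"
    using order.not_eq_order_implies_strict[OF ne le(1)] le(2) by auto
  show ev: "eventually (\<lambda>n. of_int \<lfloor>z\<rfloor> < Y n \<and> Y n < of_int \<lfloor>z\<rfloor> + 1) sequentially"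
    using order_tendstoD(1)[OF Y f(1)] order_tendstoD(2)[OF Y f(2)] by (rule eventually_conj)
  have E: "eventually (\<lambda>n. 1 / (Y n - of_int \<lfloor>z\<rfloor>) = cfT (Y n)) sequentially"
  proof (rule eventually_mono[OF ev])
    fix n assume "of_int \<lfloor>z\<rfloor> < Y n \<and> Y n < of_int \<lfloor>z\<rfloor> + 1"
    hence "\<lfloor>Y n\<rfloor> = \<lfloor>z\<rfloor>" by (intro floor_unique) auto
    thus "1 / (Y n - of_int \<lfloor>z\<rfloor>) = cfT (Y n)" by (simp add: cfT_def)
  qed
  have L: "(\<lambda>n. 1 / (Y n - of_int \<lfloor>z\<rfloor>)) \<longlonglongrightarrow> 1 / (z - of_int \<lfloor>z\<rfloor>)"
    using f by (intro tendsto_intros Y) auto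
  show "(\<lambda>n. cfT (Y n)) \<longlonglongrightarrow> cfT z"
    unfolding cfT_def[of z] by (rule Lim_transform_eventually[OF L E])
qed

lemma conv_iter:
  fixes Y :: "nat \<Rightarrow> real"
  assumes Y: "Y \<longlonglongrightarrow> x" and x: "x > 1" "x \<notin> \<rat>"
  shows "(\<lambda>n. (cfT ^^ i) (Y n)) \<longlonglongrightarrow> (cfT ^^ i) x"
proof (induction i)
  case 0 thus ?case using Y by simp
next
  case (Suc i)
  have "(cfT ^^ i) x \<notin> \<int>" using irr_orbit[OF x, of i] Ints_subset_Rats by blast
  thus ?case using conv_step(2)[OF Suc] by simp
qed

theorem theorem1:
  fixes x :: real
  assumes "x > 1" and "x \<notin> \<rat>"
  shows "\<exists>\<kappa> :: nat \<Rightarrow> int. \<forall>xs :: nat \<Rightarrow> rat.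
           (\<forall>n. xs n \<ge> 1) \<and> (\<lambda>n. of_rat (xs n) :: real) \<longlonglongrightarrow> x \<longrightarrow>
           (\<forall>k. eventually (\<lambda>n. fls_nth (qrat (xs n)) (int k) = of_int (\<kappa> k)) sequentially)"
proof -
  define X where "X i = (cfT ^^ i) x" for i
  define P where "P k = map (\<lambda>i. nat \<lfloor>X i\<rfloor>) [0..<2*k+2]" for k
  define \<kappa> where "\<kappa> k = \<lfloor>Wf (P k) $ k\<rfloor>" for k
  have X1: "X i > 1" for i using irr_orbit[OF assms] by (simp add: X_def)
  have XnI: "X i \<notin> \<int>" for i using irr_orbit[OF assms] Ints_subset_Rats by (auto simp: X_def)
  have fX: "\<lfloor>X i\<rfloor> \<ge> 1" for i using X1[of i] by simp
  have vP: "vl (P k)" "even (length (P k))" "length (P k) = 2*k+2" for k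
  proof -
    have "nat \<lfloor>X i\<rfloor> \<ge> 1" for i using fX[of i] by (simp add: le_nat_iff)
    thus "vl (P k)" by (auto simp: vl_def P_def)
    show "even (length (P k))" "length (P k) = 2*k+2" by (simp_all add: P_def)
  qed
  have Pn: "P k ! i = nat \<lfloor>X i\<rfloor>" if "i < 2*k+2" for i k
    using that by (simp add: P_def del: upt_Suc)
  have kap: "of_int (\<kappa> k) = Wf (P k) $ k" for k
  proof -
    have "Wf (P k) $ k \<in> \<int>" using Wf_zi[OF vP(1,2)] by (simp add: zi_def)
    thus ?thesis by (metis Ints_cases floor_of_int \<kappa>_def)
  qed
  show ?thesis
  proof (intro exI[of _ \<kappa>] allI impI)
    fix xs :: "nat \<Rightarrow> rat" and k :: nat
    assume H: "(\<forall>n. xs n \<ge> 1) \<and> (\<lambda>n. of_rat (xs n) :: real) \<longlonglongrightarrow> x"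
    define Y where "Y n = (of_rat (xs n) :: real)" for n
    have Yeq: "Y = (\<lambda>n. of_rat (xs n))" by (simp add: Y_def fun_eq_iff)
    have Y: "Y \<longlonglongrightarrow> x" using H unfolding Yeq by blast
    define m where "m = 2*k+2"
    have ev1: "eventually (\<lambda>n. xs n > 1) sequentially"
      using order_tendstoD(1)[OF Y assms(1)]
      by (rule eventually_mono) (metis Y_def of_rat_1 of_rat_less)
    have ev2: "eventually (\<lambda>n. \<forall>i\<in>{..<m}. of_int \<lfloor>X i\<rfloor> < (cfT ^^ i) (Y n) \<and> (cfT ^^ i) (Y n) < of_int \<lfloor>X i\<rfloor> + 1) sequentially"
    proof (rule eventually_ball_finite)
      show "finite {..<m}" by simp
      show "\<forall>i\<in>{..<m}. eventually (\<lambda>n. of_int \<lfloor>X i\<rfloor> < (cfT ^^ i) (Y n) \<and> (cfT ^^ i) (Y n) < of_int \<lfloor>X i\<rfloor> + 1) sequentially"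
        using conv_step(1)[OF conv_iter[OF Y assms] XnI[unfolded X_def]] by (simp add: X_def)
    qed
    show "eventually (\<lambda>n. fls_nth (qrat (xs n)) (int k) = of_int (\<kappa> k)) sequentially"
    proof (rule eventually_mono[OF eventually_conj[OF ev1 ev2]])
      fix n assume A: "1 < xs n \<and> (\<forall>i\<in>{..<m}. of_int \<lfloor>X i\<rfloor> < (cfT ^^ i) (Y n) \<and> (cfT ^^ i) (Y n) < of_int \<lfloor>X i\<rfloor> + 1)"
      define L where "L = even_cf (xs n)"
      have L: "vl L" "even (length L)" "cf_val L = xs n" using even_cf_ok[of "xs n"] A by (auto simp: L_def)
      have fl: "\<lfloor>(cfT ^^ i) (Y n)\<rfloor> = \<lfloor>X i\<rfloor>" if "i < m" for i
      proof -
        have "of_int \<lfloor>X i\<rfloor> < (cfT ^^ i) (Y n) \<and> (cfT ^^ i) (Y n) < of_int \<lfloor>X i\<rfloor> + 1"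
          using A that by blast
        thus ?thesis by (intro floor_unique) auto
      qed
      have nI: "(cfT ^^ i) (Y n) \<notin> \<int>" if "i < m" for i
      proof
        assume "(cfT ^^ i) (Y n) \<in> \<int>"
        then obtain t where t: "(cfT ^^ i) (Y n) = of_int t" by (metis Ints_cases)
        hence "\<lfloor>(cfT ^^ i) (Y n)\<rfloor> = t" by simp
        hence "t = \<lfloor>X i\<rfloor>" using fl[OF that] by simp
        moreover have "of_int \<lfloor>X i\<rfloor> < (cfT ^^ i) (Y n)" using A that by blast
        ultimately show False using t by simp
      qed
      have pre: "m < length L \<and> (\<forall>i<m. L ! i = nat \<lfloor>(cfT ^^ i) (Y n)\<rfloor>)"
        using cf_prefix[of m] L nI by (auto simp: Y_def)
      have tk: "take (2 * Suc k) L = take (2 * Suc k) (P k)"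
      proof (rule nth_take_lemma)
        show "2 * Suc k \<le> length L" using pre by (simp add: m_def)
        show "2 * Suc k \<le> length (P k)" using vP(3) by simp
        fix i show "i < 2 * Suc k \<longrightarrow> L ! i = P k ! i"
        proof
          assume "i < 2 * Suc k"
          hence "i < m" by (simp add: m_def)
          thus "L ! i = P k ! i" using pre fl Pn[of i k] by (simp add: m_def)
        qed
      qed
      obtain h where h: "Wf L - Wf (P k) = fps_X ^ Suc k * h"
        using Wf_contr[OF L(1) vP(1) L(2) vP(2) _ _ tk] pre vP(3) by (auto simp: m_def)
      have "Wf L $ k = Wf (P k) $ k"
      proof -
        have "(fps_X ^ Suc k * h) $ k = 0" by (simp only: fps_X_power_mult_nth) simp
        hence "(Wf L - Wf (P k)) $ k = 0" using h by simp
        thus ?thesis by simp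
      qed
      moreover have "qrat (xs n) = fps_to_fls (Wf L)"
        using A L qcf_Wf[OF L(1,2)] by (simp add: qrat_def L_def)
      ultimately show "fls_nth (qrat (xs n)) (int k) = of_int (\<kappa> k)" using kap by simp
    qed
  qed
qed

end
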